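(* Let $s\ge 4$ be a perfect square and $E=\mathbb{R}^{s\times s\times s}$. Let $C_1,\dots,C_5\subset E$ be the Sudoku constraint sets defined in the context, and assume $C_1\cap\dots\cap C_5\neq\emptyset$. Let $z_{1,0},\dots,z_{5,0}\in E$ and consider the product-space Douglas--Rachford iteration \[ x_{k+1}=\tfrac15\sum_{i=1}^5 z_{i,k},\qquad u_{i,k+1}\in P_{C_i}(2x_{k+1}-z_{i,k}),\qquad z_{i,k+1}=z_{i,k}+u_{i,k+1}-x_{k+1}\quad(i=1,\dots,5). \] Write $\mathbf{z}_k=(z_{1,k},\dots,z_{5,k})$, $\mathbf{u}_k=(u_{1,k},\dots,u_{5,k})$. Assume the iteration converges: $\mathbf{z}_k\to\mathbf{z}^\star=(z_1^\star,\dots,z_5^\star)$, $x_k\to x^\star$ and $u_{i,k}\to x^\star$ for each $i$, where $x^\star=\tfrac15\sum_{i=1}^5 z_i^\star$. Suppose moreover that for $i=1,\dots,4$, $C_i$ is prox-regular at $x^\star$ for $x^\star-z_i^\star$ and \[ x^\star-z_i^\star\in\operatorname{int}\big(N_{C_i}(x^\star)\big). \] Then for all $k$ large enough $u_{i,k}=x^\star$ for $i=1,\dots,4$, and $\|\mathbf{z}_k-\mathbf{z}^\star\|=O(\eta^k)$ with $\eta=\frac{\sqrt5}{5}$ (norm on $E^5$ is the Euclidean product norm).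
   Context: Entries of $x\in E$ are $x(i,j,k)$, $i,j,k\in\{1,\dots,s\}$. Let $\mathcal{E}=\{e_1,\dots,e_s\}$ be the standard basis vectors of $\mathbb{R}^s$. $C_1=\{x: x(\cdot,j,k)\in\mathcal{E}\ \forall j,k\}$; $C_2=\{x: x(i,\cdot,k)\in\mathcal{E}\ \forall i,k\}$; $C_3=\{x: x(i,j,\cdot)\in\mathcal{E}\ \forall i,j\}$; $C_4=\{x:$ for every $k$ and every $a,b\in\{1,\dots,\sqrt s\}$, the $\sqrt s\times\sqrt s$ block $\big(x(i,j,k)\big)_{i\in\{\sqrt s(a-1)+1,\dots,\sqrt s a\},\, j\in\{\sqrt s(b-1)+1,\dots,\sqrt s b\}}$, viewed as a vector in $\mathbb{R}^s$, lies in $\mathcal{E}\}$; $C_5=\{x: x(i,j,k)=g(i,j,k)\ \forall (i,j,k)\in\Omega\}$ for a given index set $\Omega$ and given values $g$ (encoding the provided clues). For non-empty $C$, $P_C(x)=\{y\in C:\|x-y\|=\operatorname{dist}(x,C)\}$. $C$ is prox-regular at $x\in C$ for $v$ if $P_C(x+v)=\{x\}$. The proximal normal cone is $N^P_C(x)=\operatorname{cone}(P_C^{-1}(x)-x)$; the limiting normal cone $N_C(x)$ is the set of all limits of $v_k\in N^P_C(x_k)$ with $x_k\in C$, $x_k\to x$. $\operatorname{int}$ denotes interior. *)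

theory Defs
  imports "HOL-Analysis.Analysis" "HOL-Library.Landau_Symbols"
begin

text \<open>The space E = R^(s x s x s) is modelled as real ^ ('a * 'a * 'a) for a finite
index type 'a, together with a bijection ix : 'a -> {1..s} fixing the labelling of
indices (needed for the block constraint C4).\<close>

type_synonym 'a tensor = "real ^ ('a \<times> 'a \<times> 'a)"

definition is_std_basis :: "('b \<Rightarrow> real) \<Rightarrow> 'b set \<Rightarrow> bool" where
  "is_std_basis v I \<longleftrightarrow> (\<exists>p\<in>I. \<forall>q\<in>I. v q = (if q = p then 1 else 0))"

definition C1 :: "'a::finite tensor set" where
  "C1 = {x. \<forall>j k. is_std_basis (\<lambda>i. x $ (i, j, k)) UNIV}"

definition C2 :: "'a::finite tensor set" where
  "C2 = {x. \<forall>i k. is_std_basis (\<lambda>j. x $ (i, j, k)) UNIV}"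

definition C3 :: "'a::finite tensor set" where
  "C3 = {x. \<forall>i j. is_std_basis (\<lambda>k. x $ (i, j, k)) UNIV}"

definition block_idx :: "('a \<Rightarrow> nat) \<Rightarrow> nat \<Rightarrow> nat \<Rightarrow> 'a set" where
  "block_idx ix r a = {i. r * (a - 1) + 1 \<le> ix i \<and> ix i \<le> r * a}"

definition C4 :: "('a::finite \<Rightarrow> nat) \<Rightarrow> nat \<Rightarrow> 'a tensor set" where
  "C4 ix r = {x. \<forall>k. \<forall>a\<in>{1..r}. \<forall>b\<in>{1..r}.
      is_std_basis (\<lambda>(i, j). x $ (i, j, k)) (block_idx ix r a \<times> block_idx ix r b)}"

definition C5 :: "('a \<times> 'a \<times> 'a) set \<Rightarrow> ('a \<times> 'a \<times> 'a \<Rightarrow> real) \<Rightarrow> 'a::finite tensor set" where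
  "C5 \<Omega> g = {x. \<forall>p\<in>\<Omega>. x $ p = g p}"

definition sudoku_C :: "('a::finite \<Rightarrow> nat) \<Rightarrow> nat \<Rightarrow> ('a \<times> 'a \<times> 'a) set
    \<Rightarrow> ('a \<times> 'a \<times> 'a \<Rightarrow> real) \<Rightarrow> nat \<Rightarrow> 'a tensor set" where
  "sudoku_C ix r \<Omega> g i =
     (if i = 1 then C1 else if i = 2 then C2 else if i = 3 then C3
      else if i = 4 then C4 ix r else C5 \<Omega> g)"

definition proj :: "'v::real_normed_vector set \<Rightarrow> 'v \<Rightarrow> 'v set" where
  "proj C x = {y \<in> C. dist x y = infdist x C}"

definition prox_regular_at :: "'v::real_normed_vector set \<Rightarrow> 'v \<Rightarrow> 'v \<Rightarrow> bool" where
  "prox_regular_at C x v \<longleftrightarrow> x \<in> C \<and> proj C (x + v) = {x}"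

definition proximal_normal :: "'v::real_normed_vector set \<Rightarrow> 'v \<Rightarrow> 'v set" where
  "proximal_normal C x = cone hull {w - x | w. x \<in> proj C w}"

definition limiting_normal :: "'v::real_normed_vector set \<Rightarrow> 'v \<Rightarrow> 'v set" where
  "limiting_normal C x = {v. \<exists>xs vs. (\<forall>k. xs k \<in> C \<and> vs k \<in> proximal_normal C (xs k))
       \<and> xs \<longlonglongrightarrow> x \<and> vs \<longlonglongrightarrow> v}"

end

theory Submission
  imports Defs
begin


lemma sum5: "(\<Sum>i=(1::nat)..5. f i) = f 1 + f 2 + f 3 + f 4 + (f 5::'b::comm_monoid_add)"
  by (simp add: numeral_eq_Suc add.assoc)

lemma normsq_vec: "(norm (x::real^'n))\<^sup>2 = (\<Sum>p\<in>UNIV. (x$p)\<^sup>2)"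
  unfolding norm_vec_def L2_set_def by (simp add: sum_nonneg)

lemma std_basis_01: "is_std_basis v I \<Longrightarrow> q \<in> I \<Longrightarrow> v q \<in> {0,1}"
  unfolding is_std_basis_def by auto

lemma block_mem:
  assumes "ix i \<in> {1..r^2}" "r > 0"
  shows "\<exists>a\<in>{1..r}. i \<in> block_idx ix r a"
proof -
  define d where "d = (ix i - 1) div r"
  define m where "m = (ix i - 1) mod r"
  have dm: "ix i - 1 = r*d + m" unfolding d_def m_def by simp
  have m: "m < r" unfolding m_def using assms by simp
  have lt: "ix i - 1 < r * r" using assms by (auto simp: power2_eq_square)
  have "d < r" unfolding d_def using lt assms by (simp add: div_less_iff_less_mult mult.commute)
  moreover have "i \<in> block_idx ix r (d+1)"
    unfolding block_idx_def using dm m assms(1) by (auto simp: algebra_simps)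
  ultimately show ?thesis by (intro bexI[of _ "d+1"]) auto
qed

lemma C_01:
  assumes "bij_betw ix UNIV {1..r^2}" "r > 0" "i \<in> {1..4}" "y \<in> sudoku_C ix r \<Omega> g i"
  shows "y $ q \<in> {0,1}"
proof -
  obtain a b c where q: "q = (a,b,c)" by (cases q) auto
  have "i = 1 \<or> i = 2 \<or> i = 3 \<or> i = 4" using assms(3) by auto
  then show ?thesis
  proof (elim disjE)
    assume "i = 1"
    then have "is_std_basis (\<lambda>i. y $ (i, b, c)) UNIV" using assms(4) by (auto simp: sudoku_C_def C1_def)
    from std_basis_01[OF this, of a] show ?thesis by (simp add: q)
  next
    assume "i = 2"
    then have "is_std_basis (\<lambda>j. y $ (a, j, c)) UNIV" using assms(4) by (auto simp: sudoku_C_def C2_def)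
    from std_basis_01[OF this, of b] show ?thesis by (simp add: q)
  next
    assume "i = 3"
    then have "is_std_basis (\<lambda>k. y $ (a, b, k)) UNIV" using assms(4) by (auto simp: sudoku_C_def C3_def)
    from std_basis_01[OF this, of c] show ?thesis by (simp add: q)
  next
    assume "i = 4"
    have ia: "ix a \<in> {1..r^2}" "ix b \<in> {1..r^2}" using assms(1) by (auto dest: bij_betw_apply)
    obtain a' where a': "a'\<in>{1..r}" "a \<in> block_idx ix r a'" using block_mem[where ix=ix and i=a, OF ia(1) assms(2)] by blast
    obtain b' where b': "b'\<in>{1..r}" "b \<in> block_idx ix r b'" using block_mem[where ix=ix and i=b, OF ia(2) assms(2)] by blast
    have "is_std_basis (\<lambda>(i, j). y $ (i, j, c)) (block_idx ix r a' \<times> block_idx ix r b')"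
      using assms(4) \<open>i=4\<close> a' b' by (auto simp: sudoku_C_def C4_def)
    from std_basis_01[OF this, of "(a,b)"] a' b' show ?thesis by (simp add: q)
  qed
qed


lemma seq01_eventually:
  fixes f :: "nat \<Rightarrow> real"
  assumes "\<forall>k\<ge>1. f k \<in> {0,1}" "f \<longlonglongrightarrow> L"
  shows "eventually (\<lambda>k. f k = L) sequentially"
proof -
  have "eventually (\<lambda>k. dist (f k) L < 1/2) sequentially"
    using tendstoD[OF assms(2), of "1/2"] by linarith
  moreover have "eventually (\<lambda>k. k \<ge> 1) sequentially" by (simp add: eventually_ge_at_top)
  ultimately have ev: "eventually (\<lambda>k. dist (f k) L < 1/2 \<and> f k \<in> {0,1}) sequentially"
    by eventually_elim (use assms(1) in auto)
  then obtain N where N: "\<forall>k\<ge>N. dist (f k) L < 1/2 \<and> f k \<in> {0,1}" by (auto simp: eventually_sequentially)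
  have "L \<in> {0,1}"
  proof -
    have "\<forall>k\<ge>N. f k = f N"
    proof (intro allI impI)
      fix k assume "k \<ge> N"
      then have "dist (f k) L < 1/2" "dist (f N) L < 1/2" "f k \<in> {0,1}" "f N \<in> {0,1}" using N by auto
      then have d: "\<bar>f k - L\<bar> < 1/2" "\<bar>f N - L\<bar> < 1/2" "f k = 0 \<or> f k = 1" "f N = 0 \<or> f N = 1"
        by (simp_all add: dist_real_def)
      from d(3,4) show "f k = f N" using d(1,2) by (elim disjE) (simp_all add: abs_if split: if_splits)
    qed
    then have "(\<lambda>n. f (n + N)) = (\<lambda>n. f N)" by (intro ext) (meson le_add2)
    moreover have "(\<lambda>n. f (n + N)) \<longlonglongrightarrow> L" using assms(2) by (rule LIMSEQ_ignore_initial_segment)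
    ultimately have "f N = L" by (simp add: LIMSEQ_const_iff)
    then show ?thesis using N by auto
  qed
  from ev show ?thesis
  proof eventually_elim
    case (elim k)
    then have d: "\<bar>f k - L\<bar> < 1/2" "f k = 0 \<or> f k = 1" by (simp_all add: dist_real_def)
    have "L = 0 \<or> L = 1" using \<open>L \<in> {0,1}\<close> by simp
    from d(2) this show ?case using d(1) by (elim disjE) (simp_all add: abs_if split: if_splits)
  qed
qed



lemma eventually_const_lim:
  fixes f :: "nat \<Rightarrow> real"
  assumes "\<forall>k\<ge>N. f k = c" "f \<longlonglongrightarrow> L" shows "c = L"
proof -
  have "(\<lambda>n. f (n + N)) = (\<lambda>n. c)" using assms(1) by (intro ext) (meson le_add2)
  moreover have "(\<lambda>n. f (n + N)) \<longlonglongrightarrow> L" using assms(2) by (rule LIMSEQ_ignore_initial_segment)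
  ultimately show ?thesis by (simp add: LIMSEQ_const_iff)
qed

lemma coord:
  fixes a :: "nat \<Rightarrow> nat \<Rightarrow> real" and \<alpha> :: "nat \<Rightarrow> real" and m :: "nat \<Rightarrow> real"
  assumes m: "\<forall>k. m k = (a 1 k + a 2 k + a 3 k + a 4 k + a 5 k)/5"
    and mu: "\<mu> = (\<alpha> 1 + \<alpha> 2 + \<alpha> 3 + \<alpha> 4 + \<alpha> 5)/5"
    and lim: "\<forall>i\<in>{1..5}. (\<lambda>k. a i k) \<longlonglongrightarrow> \<alpha> i"
    and rec: "\<forall>k\<ge>K. \<forall>i\<in>{1..4}. a i (Suc k) = a i k + \<mu> - m k"
    and rec5: "(\<forall>k\<ge>K. a 5 (Suc k) = a 5 k + \<mu> - m k) \<or> (\<forall>k\<ge>K. a 5 (Suc k) = m k)"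
  shows "\<forall>k\<ge>Suc K. (\<Sum>i=1..5. (a i (Suc k) - \<alpha> i)\<^sup>2) = (\<Sum>i=1..5. (a i k - \<alpha> i)\<^sup>2) / 5"
  using rec5
proof
  assume r5: "\<forall>k\<ge>K. a 5 (Suc k) = a 5 k + \<mu> - m k"
  have all: "\<forall>k\<ge>K. \<forall>i\<in>{1..5}. a i (Suc k) = a i k + \<mu> - m k"
  proof (intro allI impI ballI)
    fix k i assume "K \<le> k" "i \<in> {1..(5::nat)}"
    then show "a i (Suc k) = a i k + \<mu> - m k" using rec r5
      by (cases "i = 5") auto
  qed
  have mK: "m (Suc k) = \<mu>" if "K \<le> k" for k
  proof -
    have "a 1 (Suc k) = a 1 k + \<mu> - m k" "a 2 (Suc k) = a 2 k + \<mu> - m k" "a 3 (Suc k) = a 3 k + \<mu> - m k"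
      "a 4 (Suc k) = a 4 k + \<mu> - m k" "a 5 (Suc k) = a 5 k + \<mu> - m k" using all that by auto
    then show ?thesis using m[rule_format, of k] m[rule_format, of "Suc k"] by (simp add: field_simps)
  qed
  have cst: "a i k = a i (Suc K)" if "i \<in> {1..5}" "Suc K \<le> k" for i k
    using that(2)
  proof (induction k rule: dec_induct)
    case base then show ?case by simp
  next
    case (step k)
    obtain k' where k': "k = Suc k'" "K \<le> k'" using step(1) by (cases k) auto
    have "K \<le> k" using step(1) by simp
    have "a i (Suc k) = a i k + \<mu> - m k" using all[rule_format, OF \<open>K \<le> k\<close> that(1)] .
    also have "m k = \<mu>" using mK k' by simp
    finally show ?case using step(3) by simp
  qed
  have eq: "a i (Suc K) = \<alpha> i" if "i \<in> {1..5}" for i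
  proof (rule eventually_const_lim[of "Suc K" "a i" "a i (Suc K)" "\<alpha> i"])
    show "\<forall>k\<ge>Suc K. a i k = a i (Suc K)" using cst[OF that] by blast
    show "(\<lambda>k. a i k) \<longlonglongrightarrow> \<alpha> i" using lim that by blast
  qed
  show ?thesis
  proof (intro allI impI)
    fix k assume k: "Suc K \<le> k"
    have "a i k = \<alpha> i" "a i (Suc k) = \<alpha> i" if "i \<in> {1..5}" for i
      using cst[OF that, of k] cst[OF that, of "Suc k"] eq[OF that] k by auto
    then show "(\<Sum>i=1..5. (a i (Suc k) - \<alpha> i)\<^sup>2) = (\<Sum>i=1..5. (a i k - \<alpha> i)\<^sup>2) / 5"
      by simp
  qed
next
  assume r5: "\<forall>k\<ge>K. a 5 (Suc k) = m k"
  define S where "S k = a 1 k + a 2 k + a 3 k + a 4 k" for k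
  define A where "A = \<alpha> 1 + \<alpha> 2 + \<alpha> 3 + \<alpha> 4"
  have lim': "(\<lambda>k. a i k) \<longlonglongrightarrow> \<alpha> i" if "i \<in> {1..5}" for i using lim that by auto
  have Slim: "S \<longlonglongrightarrow> A" unfolding S_def A_def
    by (intro tendsto_add lim') auto
  have mlim: "m \<longlonglongrightarrow> \<mu>"
  proof -
    have "(\<lambda>k. (a 1 k + a 2 k + a 3 k + a 4 k + a 5 k)/5) \<longlonglongrightarrow> (\<alpha> 1 + \<alpha> 2 + \<alpha> 3 + \<alpha> 4 + \<alpha> 5)/5"
      by (intro tendsto_divide tendsto_add lim' tendsto_const) auto
    moreover have "m = (\<lambda>k. (a 1 k + a 2 k + a 3 k + a 4 k + a 5 k)/5)" using m by (intro ext) blast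
    ultimately show ?thesis unfolding mu by simp
  qed
  have a5: "\<alpha> 5 = \<mu>"
  proof -
    have "(\<lambda>k. a 5 (Suc k)) \<longlonglongrightarrow> \<alpha> 5" using LIMSEQ_Suc[OF lim'[of 5]] by simp
    then have "(\<lambda>n. a 5 (Suc (n + K))) \<longlonglongrightarrow> \<alpha> 5" by (rule LIMSEQ_ignore_initial_segment)
    moreover have "(\<lambda>n. a 5 (Suc (n + K))) = (\<lambda>n. m (n + K))" using r5 by auto
    moreover have "(\<lambda>n. m (n + K)) \<longlonglongrightarrow> \<mu>" using mlim by (rule LIMSEQ_ignore_initial_segment)
    ultimately show ?thesis using LIMSEQ_unique by metis
  qed
  have AA: "A = 4 * \<mu>" using mu a5 unfolding A_def by simp
  have Srec: "S (Suc k) = S k + 4*\<mu> - 4 * m k" if "K \<le> k" for k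
    using rec that unfolding S_def by auto
  have inv: "a i k - S k / 4 = a i K - S K / 4" if "i \<in> {1..4}" "K \<le> k" for i k
    using that(2)
  proof (induction k rule: dec_induct)
    case base then show ?case by simp
  next
    case (step k)
    have "a i (Suc k) = a i k + \<mu> - m k" using rec[rule_format, OF step(1) that(1)] .
    with Srec[OF step(1)] step(3) show ?case by (simp add: algebra_simps add_divide_distrib diff_divide_distrib)
  qed
  have inv_lim: "a i K - S K / 4 = \<alpha> i - A / 4" if "i \<in> {1..4}" for i
  proof (rule eventually_const_lim[of K "\<lambda>k. a i k - S k / 4"])
    show "\<forall>k\<ge>K. a i k - S k / 4 = a i K - S K / 4" using inv[OF that] by blast
    show "(\<lambda>k. a i k - S k / 4) \<longlonglongrightarrow> \<alpha> i - A / 4"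
      using that by (intro tendsto_diff tendsto_divide lim' Slim tendsto_const) auto
  qed
  show ?thesis
  proof (intro allI impI)
    fix k assume k: "Suc K \<le> k"
    define \<sigma> where "\<sigma> = S k - A"
    define \<tau> where "\<tau> = a 5 k - \<alpha> 5"
    have e: "a i k - \<alpha> i = \<sigma> / 4" if "i \<in> {1..4}" for i
      using inv[OF that, of k] inv_lim[OF that] k unfolding \<sigma>_def by simp
    have mk: "m k - \<mu> = (\<sigma> + \<tau>)/5"
      using m[rule_format, of k] AA a5 unfolding \<sigma>_def \<tau>_def S_def A_def by simp
    have e': "a i (Suc k) - \<alpha> i = \<sigma>/4 - (\<sigma> + \<tau>)/5" if "i \<in> {1..4}" for i
    proof -
      have "K \<le> k" using k by simp
      have "a i (Suc k) = a i k + \<mu> - m k" using rec[rule_format, OF \<open>K \<le> k\<close> that] .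
      then show ?thesis using e[OF that] mk by (simp add: field_simps)
    qed
    have e5: "a 5 (Suc k) - \<alpha> 5 = (\<sigma> + \<tau>)/5" using r5 k mk a5 by simp
    have alg: "4*(\<sigma>/4 - (\<sigma>+\<tau>)/5)^2 + ((\<sigma>+\<tau>)/5)^2 = (4*(\<sigma>/4)^2 + \<tau>^2)/5"
      by (simp add: field_simps power2_eq_square)
    have t: "a 5 k - \<alpha> 5 = \<tau>" unfolding \<tau>_def ..
    have E: "a 1 k - \<alpha> 1 = \<sigma>/4" "a 2 k - \<alpha> 2 = \<sigma>/4" "a 3 k - \<alpha> 3 = \<sigma>/4" "a 4 k - \<alpha> 4 = \<sigma>/4"
      by (rule e; simp)+
    have E': "a 1 (Suc k) - \<alpha> 1 = \<sigma>/4 - (\<sigma> + \<tau>)/5" "a 2 (Suc k) - \<alpha> 2 = \<sigma>/4 - (\<sigma> + \<tau>)/5"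
      "a 3 (Suc k) - \<alpha> 3 = \<sigma>/4 - (\<sigma> + \<tau>)/5" "a 4 (Suc k) - \<alpha> 4 = \<sigma>/4 - (\<sigma> + \<tau>)/5"
      by (rule e'; simp)+
    show "(\<Sum>i=1..5. (a i (Suc k) - \<alpha> i)\<^sup>2) = (\<Sum>i=1..5. (a i k - \<alpha> i)\<^sup>2) / 5"
      unfolding sum5 E E' e5 t using alg by simp
  qed
qed



lemma dist_sq_vec: "(dist (w::real^'n) y)\<^sup>2 = (\<Sum>q\<in>UNIV. (w$q - y$q)\<^sup>2)"
  unfolding dist_norm normsq_vec by simp

lemma proj_C5:
  assumes "y \<in> proj (C5 \<Omega> g) w"
  shows "y $ p = (if p \<in> \<Omega> then g p else w $ p)"
proof -
  define P where "P = (\<chi> q. if q \<in> \<Omega> then g q else w $ q)"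
  have yC: "y \<in> C5 \<Omega> g" and dy: "dist w y = infdist w (C5 \<Omega> g)" using assms by (auto simp: proj_def)
  have PC: "P \<in> C5 \<Omega> g" by (simp add: P_def C5_def)
  have "dist w y \<le> dist w P" using dy infdist_le[OF PC, of w] by simp
  then have "(dist w y)\<^sup>2 \<le> (dist w P)\<^sup>2" by (simp add: power_mono)
  then have le: "(\<Sum>q\<in>UNIV. (w$q - y$q)\<^sup>2) \<le> (\<Sum>q\<in>UNIV. (w$q - P$q)\<^sup>2)" by (simp add: dist_sq_vec)
  define h where "h q = (w$q - y$q)\<^sup>2 - (w$q - P$q)\<^sup>2" for q
  have hq: "h q = (if q \<in> \<Omega> then 0 else (w$q - y$q)\<^sup>2)" for q
    using yC by (simp add: h_def P_def C5_def)
  have hnn: "\<forall>q\<in>UNIV. 0 \<le> h q" by (simp add: hq)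
  have "sum h UNIV \<le> 0" using le by (simp add: h_def sum_subtractf)
  then have "sum h UNIV = 0" using sum_nonneg[of UNIV h] hnn by (simp add: hq)
  then have "h p = 0" using sum_nonneg_eq_0_iff[of UNIV h] hnn finite_class.finite_UNIV UNIV_I by metis
  then show ?thesis using yC by (auto simp: hq C5_def split: if_splits)
qed



theorem proposition4p4:
  fixes ix :: "'a::finite \<Rightarrow> nat" and r s :: nat
    and \<Omega> :: "('a \<times> 'a \<times> 'a) set" and g :: "'a \<times> 'a \<times> 'a \<Rightarrow> real"
    and z u :: "nat \<Rightarrow> nat \<Rightarrow> 'a tensor" and x :: "nat \<Rightarrow> 'a tensor"
    and zs :: "nat \<Rightarrow> 'a tensor" and xs :: "'a tensor"
  defines "C \<equiv> sudoku_C ix r \<Omega> g"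
  assumes s_sq: "s = r ^ 2" and s_ge: "s \<ge> 4"
    and ix: "bij_betw ix UNIV {1..s}"
    and feasible: "(\<Inter>i\<in>{1..5}. C i) \<noteq> {}"
    and x_step: "\<forall>k. x (Suc k) = (1 / 5) *\<^sub>R (\<Sum>i = 1..5. z i k)"
    and u_step: "\<forall>k. \<forall>i\<in>{1..5}. u i (Suc k) \<in> proj (C i) (2 *\<^sub>R x (Suc k) - z i k)"
    and z_step: "\<forall>k. \<forall>i\<in>{1..5}. z i (Suc k) = z i k + u i (Suc k) - x (Suc k)"
    and z_lim: "\<forall>i\<in>{1..5}. (\<lambda>k. z i k) \<longlonglongrightarrow> zs i"
    and x_lim: "x \<longlonglongrightarrow> xs"
    and u_lim: "\<forall>i\<in>{1..5}. (\<lambda>k. u i k) \<longlonglongrightarrow> xs"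
    and xs_def: "xs = (1 / 5) *\<^sub>R (\<Sum>i = 1..5. zs i)"
    and preg: "\<forall>i\<in>{1..4}. prox_regular_at (C i) xs (xs - zs i)"
    and int_normal: "\<forall>i\<in>{1..4}. xs - zs i \<in> interior (limiting_normal (C i) xs)"
  shows "(\<exists>K. \<forall>k\<ge>K. \<forall>i\<in>{1..4}. u i k = xs) \<and>
         (\<lambda>k. sqrt (\<Sum>i = 1..5. (norm (z i k - zs i))\<^sup>2)) \<in> O(\<lambda>k. (sqrt 5 / 5) ^ k)"
proof -
  have r0: "r > 0" using s_sq s_ge by (cases r) auto
  have ix': "bij_betw ix UNIV {1..r^2}" using ix s_sq by simp
  have uC: "u i (Suc k) \<in> C i" if "i \<in> {1..5}" for i k
    using u_step that by (auto simp: proj_def)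
  have ev: "eventually (\<lambda>k. u i k = xs) sequentially" if i: "i \<in> {1..4}" for i
  proof -
    have "eventually (\<lambda>k. u i k $ q = xs $ q) sequentially" for q
    proof (rule seq01_eventually)
      show "\<forall>k\<ge>1. u i k $ q \<in> {0, 1}"
      proof (intro allI impI)
        fix k :: nat assume "1 \<le> k"
        then obtain k' where k': "k = Suc k'" by (cases k) auto
        have "u i k \<in> sudoku_C ix r \<Omega> g i" using uC[of i k'] i k' unfolding C_def by auto
        then show "u i k $ q \<in> {0, 1}" by (rule C_01[OF ix' r0 i])
      qed
      show "(\<lambda>k. u i k $ q) \<longlonglongrightarrow> xs $ q"
        using u_lim i by (intro tendsto_vec_nth) auto
    qed
    then have "eventually (\<lambda>k. \<forall>q. u i k $ q = xs $ q) sequentially"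
      by (rule eventually_all_finite)
    then show ?thesis by (simp add: vec_eq_iff)
  qed
  have "eventually (\<lambda>k. \<forall>i\<in>{1..4}. u i k = xs) sequentially"
    by (rule eventually_ball_finite) (use ev in auto)
  then obtain K0 where K0: "\<forall>k\<ge>K0. \<forall>i\<in>{1..4}. u i k = xs" by (auto simp: eventually_sequentially)
  define F where "F p k = (\<Sum>i=1..5. (z i k $ p - zs i $ p)\<^sup>2)" for p k
  have Fc: "\<forall>k\<ge>Suc K0. F p (Suc k) = F p k / 5" for p
    unfolding F_def
  proof (rule coord[where m = "\<lambda>k. x (Suc k) $ p" and \<mu> = "xs $ p" and K = K0])
    show "\<forall>k. x (Suc k) $ p = (z 1 k $ p + z 2 k $ p + z 3 k $ p + z 4 k $ p + z 5 k $ p) / 5"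
      using x_step[unfolded sum5] by simp
    show "xs $ p = (zs 1 $ p + zs 2 $ p + zs 3 $ p + zs 4 $ p + zs 5 $ p) / 5"
      using xs_def by (simp only: sum5) simp
    show "\<forall>i\<in>{1..5}. (\<lambda>k. z i k $ p) \<longlonglongrightarrow> zs i $ p"
      using z_lim by (auto intro: tendsto_vec_nth)
    show "\<forall>k\<ge>K0. \<forall>i\<in>{1..4}. z i (Suc k) $ p = z i k $ p + xs $ p - x (Suc k) $ p"
    proof (intro allI impI ballI)
      fix k i assume k: "K0 \<le> k" and i: "i \<in> {1..(4::nat)}"
      have "u i (Suc k) = xs" using K0 k i by auto
      moreover have "z i (Suc k) = z i k + u i (Suc k) - x (Suc k)" using z_step i by auto
      ultimately show "z i (Suc k) $ p = z i k $ p + xs $ p - x (Suc k) $ p" by simp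
    qed
    have u5: "u 5 (Suc k) $ p = (if p \<in> \<Omega> then g p else (2 *\<^sub>R x (Suc k) - z 5 k) $ p)" for k
    proof -
      have "u 5 (Suc k) \<in> proj (C 5) (2 *\<^sub>R x (Suc k) - z 5 k)"
        using bspec[OF spec[OF u_step, of k], of 5] by simp
      moreover have "C 5 = C5 \<Omega> g" by (simp add: C_def sudoku_C_def)
      ultimately have "u 5 (Suc k) \<in> proj (C5 \<Omega> g) (2 *\<^sub>R x (Suc k) - z 5 k)" by simp
      then show ?thesis by (rule proj_C5)
    qed
    have z5: "z 5 (Suc k) $ p = z 5 k $ p + u 5 (Suc k) $ p - x (Suc k) $ p" for k
      using z_step by auto
    show "(\<forall>k\<ge>K0. z 5 (Suc k) $ p = z 5 k $ p + xs $ p - x (Suc k) $ p) \<or>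
          (\<forall>k\<ge>K0. z 5 (Suc k) $ p = x (Suc k) $ p)"
    proof (cases "p \<in> \<Omega>")
      case True
      have "g p = xs $ p"
      proof (rule eventually_const_lim[of 1 "\<lambda>k. u 5 k $ p"])
        show "\<forall>k\<ge>1. u 5 k $ p = g p"
        proof (intro allI impI)
          fix k :: nat assume "1 \<le> k"
          then obtain k' where "k = Suc k'" by (cases k) auto
          then show "u 5 k $ p = g p" using u5[of k'] True by simp
        qed
        show "(\<lambda>k. u 5 k $ p) \<longlonglongrightarrow> xs $ p" using u_lim by (intro tendsto_vec_nth) auto
      qed
      then show ?thesis using z5 u5 True by simp
    next
      case False
      then show ?thesis using z5 u5 by simp
    qed
  qed
  define E where "E k = (\<Sum>i = 1..5. (norm (z i k - zs i))\<^sup>2)" for k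
  have EF: "E k = (\<Sum>p\<in>UNIV. F p k)" for k
    unfolding E_def F_def normsq_vec vector_minus_component by (rule sum.swap)
  define K1 where "K1 = Suc K0"
  have Erec: "E (Suc k) = E k / 5" if "K1 \<le> k" for k
  proof -
    have "F p (Suc k) = F p k / 5" for p using Fc[of p] that unfolding K1_def by blast
    then show ?thesis unfolding EF sum_divide_distrib by (intro sum.cong refl) blast
  qed
  define \<eta> :: real where "\<eta> = sqrt 5 / 5"
  have eta: "sqrt (t / 5) = sqrt t * \<eta>" for t
    by (simp add: \<eta>_def real_sqrt_divide field_simps)
  have Eexp: "sqrt (E k) = sqrt (E K1) * \<eta> ^ (k - K1)" if "K1 \<le> k" for k
    using that
  proof (induction k rule: dec_induct)
    case base then show ?case by simp
  next
    case (step k)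
    have "sqrt (E (Suc k)) = sqrt (E k) * \<eta>" unfolding Erec[OF step(1)] by (rule eta)
    also have "\<dots> = sqrt (E K1) * \<eta> ^ (Suc k - K1)" using step(3) step(1)
      by (simp add: Suc_diff_le)
    finally show ?case .
  qed
  have etapos: "\<eta> > 0" by (simp add: \<eta>_def)
  have big: "(\<lambda>k. sqrt (E k)) \<in> O(\<lambda>k. \<eta> ^ k)"
  proof (rule bigoI[where c = "sqrt (E K1) / \<eta> ^ K1"])
    show "eventually (\<lambda>k. norm (sqrt (E k)) \<le> sqrt (E K1) / \<eta> ^ K1 * norm (\<eta> ^ k)) at_top"
      unfolding eventually_at_top_linorder
    proof (intro exI allI impI)
      fix k assume k: "K1 \<le> k"
      have "\<eta> ^ k = \<eta> ^ (k - K1) * \<eta> ^ K1" using k by (simp add: power_add[symmetric])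
      then have "sqrt (E K1) / \<eta> ^ K1 * norm (\<eta> ^ k) = sqrt (E K1) * \<eta> ^ (k - K1)"
        using etapos by simp
      then show "norm (sqrt (E k)) \<le> sqrt (E K1) / \<eta> ^ K1 * norm (\<eta> ^ k)"
        using Eexp[OF k] etapos by (simp add: E_def sum_nonneg)
    qed
  qed
  show ?thesis
  proof
    show "\<exists>K. \<forall>k\<ge>K. \<forall>i\<in>{1..4}. u i k = xs" using K0 by blast
    show "(\<lambda>k. sqrt (\<Sum>i = 1..5. (norm (z i k - zs i))\<^sup>2)) \<in> O(\<lambda>k. (sqrt 5 / 5) ^ k)"
      using big unfolding E_def \<eta>_def .
  qed
qed


end
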